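(* Let $R$ be a commutative ring which is free as an abelian group with $\mathbb{Z}$-basis $V=\{v_k\}_{k\in I}$, let $n\ge2$, $p$ a prime and $r\ge1$. For $1\le i,j\le n$ with $i+j<2n$ and $k\in I$ define $$A_{ij,k,r}=\begin{cases}1+p^rv_ke_{ij}&i\ne j,\\ 1+p^rv_k(e_{ii}-e_{nn})&i=j.\end{cases}$$ Regard $\Gamma(SL_n(R),p^r)/\Gamma(SL_n(R),p^{r+1})$ as the subgroup of $SL_n(R/p^{r+1}R)$ given by the kernel of the reduction map $SL_n(R/p^{r+1}R)\to SL_n(R/p^rR)$ (to which it is isomorphic via reduction mod $p^{r+1}$). Then this group is generated by the reductions mod $p^{r+1}$ of the matrices $A_{ij,k,r}$.
   Context: $\Gamma(SL_n(R),p^m)=\ker\big(SL_n(R)\to SL_n(R/p^mR)\big)$; $1$ is the $n\times n$ identity matrix and $e_{ij}$ is the $n\times n$ matrix with $1$ in position $(i,j)$ and zeros elsewhere. (Note $\det A_{ii,k,r}=1-p^{2r}v_k^2\equiv1\pmod{p^{r+1}}$, so the reductions lie in $SL_n(R/p^{r+1}R)$.) *)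

theory Defs
  imports "Jordan_Normal_Form.Determinant" "HOL-Algebra.Generated_Groups" "HOL-Algebra.Coset"
    "HOL-Computational_Algebra.Primes"
begin

definition Z_basis :: "'i set \<Rightarrow> ('i \<Rightarrow> 'a::comm_ring_1) \<Rightarrow> bool" where
  "Z_basis I v \<longleftrightarrow> (\<forall>x::'a. \<exists>!c::'i \<Rightarrow> int.
      finite {k. c k \<noteq> 0} \<and> {k. c k \<noteq> 0} \<subseteq> I \<and>
      x = (\<Sum>k\<in>{k. c k \<noteq> 0}. of_int (c k) * v k))"

definition cong_mat :: "'a::comm_ring_1 \<Rightarrow> 'a mat \<Rightarrow> 'a mat \<Rightarrow> bool" where
  "cong_mat q M N \<longleftrightarrow> dim_row M = dim_row N \<and> dim_col M = dim_col N \<and>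
     (\<forall>i<dim_row M. \<forall>j<dim_col M. q dvd (M $$ (i,j) - N $$ (i,j)))"

text \<open>An n x n matrix over R/qR, represented as the class of its lifts to R.\<close>
definition mat_class :: "nat \<Rightarrow> 'a::comm_ring_1 \<Rightarrow> 'a mat \<Rightarrow> 'a mat set" where
  "mat_class n q M = {N \<in> carrier_mat n n. cong_mat q M N}"

text \<open>The group SL_n(R/qR): classes of n x n matrices over R with determinant
  congruent to 1 modulo q, with multiplication induced from R.\<close>
definition SL_mod :: "nat \<Rightarrow> 'a::comm_ring_1 \<Rightarrow> 'a mat set monoid" where
  "SL_mod n q = \<lparr> carrier = {mat_class n q M | M. M \<in> carrier_mat n n \<and> q dvd (det M - 1)},
      mult = (\<lambda>X Y. mat_class n q ((SOME M. M \<in> X) * (SOME N. N \<in> Y))),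
      one = mat_class n q (1\<^sub>m n) \<rparr>"

text \<open>Reduction map SL_n(R/qR) -> SL_n(R/q'R) (for q' dividing q).\<close>
definition reduce_mod :: "nat \<Rightarrow> 'a::comm_ring_1 \<Rightarrow> 'a mat set \<Rightarrow> 'a mat set" where
  "reduce_mod n q' X = mat_class n q' (SOME M. M \<in> X)"

definition elem_mat :: "nat \<Rightarrow> nat \<Rightarrow> nat \<Rightarrow> 'a::comm_ring_1 mat" where
  "elem_mat n i j = mat n n (\<lambda>(a,b). if a = i \<and> b = j then 1 else 0)"

text \<open>A_{ij,k,r} with x = v_k; indices 0-based, so the paper's index n is n-1.\<close>
definition A_mat :: "nat \<Rightarrow> nat \<Rightarrow> nat \<Rightarrow> 'a::comm_ring_1 \<Rightarrow> nat \<Rightarrow> nat \<Rightarrow> 'a mat" where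
  "A_mat n p r x i j =
     1\<^sub>m n + (of_nat p ^ r * x) \<cdot>\<^sub>m
       (if i \<noteq> j then elem_mat n i j else elem_mat n i i - elem_mat n (n-1) (n-1))"

end

theory Submission
  imports Defs
begin


lemma cong_refl: "cong_mat q M M" by (simp add: cong_mat_def)

lemma cong_sym: "cong_mat q M N \<Longrightarrow> cong_mat q N M"
  unfolding cong_mat_def by (metis dvd_minus_iff minus_diff_eq)

lemma cong_trans: "cong_mat q M N \<Longrightarrow> cong_mat q N K \<Longrightarrow> cong_mat q M K"
  unfolding cong_mat_def
proof (intro conjI allI impI, simp_all, goal_cases)
  case (1 i j)
  then have "q dvd (M $$ (i,j) - N $$ (i,j)) + (N $$ (i,j) - K $$ (i,j))"
    by (intro dvd_add) auto
  then show ?case by simp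
qed

lemma cong_dvd: "q' dvd q \<Longrightarrow> cong_mat q M N \<Longrightarrow> cong_mat q' M N"
  unfolding cong_mat_def using dvd_trans by blast

lemma mem_class: "N \<in> mat_class n q M \<longleftrightarrow> N \<in> carrier_mat n n \<and> cong_mat q M N"
  by (simp add: mat_class_def)

lemma class_eq: assumes "M \<in> carrier_mat n n" "N \<in> carrier_mat n n"
  shows "mat_class n q M = mat_class n q N \<longleftrightarrow> cong_mat q M N"
proof
  assume "mat_class n q M = mat_class n q N"
  then have "N \<in> mat_class n q M" using assms by (simp add: mat_class_def cong_refl)
  then show "cong_mat q M N" by (simp add: mat_class_def)
next
  assume c: "cong_mat q M N"
  show "mat_class n q M = mat_class n q N"
    unfolding mat_class_def using c cong_sym cong_trans by blast
qed

lemma rep_class: assumes "M \<in> carrier_mat n n"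
  shows "(SOME N. N \<in> mat_class n q M) \<in> carrier_mat n n \<and> cong_mat q M (SOME N. N \<in> mat_class n q M)"
proof -
  have "M \<in> mat_class n q M" using assms by (simp add: mat_class_def cong_refl)
  then have "(SOME N. N \<in> mat_class n q M) \<in> mat_class n q M" by (rule someI)
  then show ?thesis by (simp add: mat_class_def)
qed

lemma prod_cong: assumes "finite S" "\<And>i. i \<in> S \<Longrightarrow> (q::'a::comm_ring_1) dvd f i - g i"
  shows "q dvd prod f S - prod g S"
  using assms
proof (induction S rule: finite_induct)
  case empty then show ?case by simp
next
  case (insert a F)
  have e: "prod f (insert a F) - prod g (insert a F) = f a * (prod f F - prod g F) + (f a - g a) * prod g F"
    using insert by (simp add: algebra_simps)
  have "q dvd f a - g a" using insert by auto
  then show ?case unfolding e using insert by (intro dvd_add dvd_mult dvd_mult2) auto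
qed

lemma det_cong: assumes "A \<in> carrier_mat n n" "B \<in> carrier_mat n n" "cong_mat q A B"
  shows "q dvd det A - det B"
proof -
  have "det A - det B = (\<Sum>p\<in>{p. p permutes {0..<n}}. signof p * ((\<Prod>i = 0..<n. A $$ (i, p i)) - (\<Prod>i = 0..<n. B $$ (i, p i))))"
    using assms by (simp add: det_def sum_subtractf algebra_simps)
  also have "q dvd \<dots>"
  proof (intro dvd_sum dvd_mult prod_cong)
    fix p i assume p: "p \<in> {p. p permutes {0..<n}}" and i: "i \<in> {0..<n}"
    then have "p i < n" by (auto simp: permutes_in_image)
    then show "q dvd A $$ (i, p i) - B $$ (i, p i)" using assms i unfolding cong_mat_def by auto
  qed auto
  finally show ?thesis .
qed

lemma mult_cong: assumes "A \<in> carrier_mat n m" "A' \<in> carrier_mat n m" "B \<in> carrier_mat m k" "B' \<in> carrier_mat m k"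
  "cong_mat q A A'" "cong_mat q B B'"
  shows "cong_mat q (A * B) (A' * B')"
  unfolding cong_mat_def
proof (intro conjI allI impI)
  fix i j assume i: "i < dim_row (A*B)" and j: "j < dim_col (A*B)"
  then have i': "i < n" and j': "j < k" using assms by auto
  have "(A*B) $$ (i,j) - (A'*B') $$ (i,j) = (\<Sum>l = 0..<m. A $$ (i,l) * (B $$ (l,j) - B' $$ (l,j)) + (A $$ (i,l) - A' $$ (i,l)) * B' $$ (l,j))"
    using assms i' j' by (simp add: scalar_prod_def sum_subtractf[symmetric] algebra_simps)
  also have "q dvd \<dots>"
    using assms i' j' unfolding cong_mat_def by (intro dvd_sum dvd_add dvd_mult dvd_mult2) auto
  finally show "q dvd (A*B) $$ (i,j) - (A'*B') $$ (i,j)" .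
qed (use assms in auto)




lemma mult_class: assumes "A \<in> carrier_mat n n" "B \<in> carrier_mat n n"
  shows "mat_class n q A \<otimes>\<^bsub>SL_mod n q\<^esub> mat_class n q B = mat_class n q (A * B)"
proof -
  let ?A = "SOME N. N \<in> mat_class n q A" and ?B = "SOME N. N \<in> mat_class n q B"
  have a: "?A \<in> carrier_mat n n" "cong_mat q A ?A" using rep_class[OF assms(1)] by auto
  have b: "?B \<in> carrier_mat n n" "cong_mat q B ?B" using rep_class[OF assms(2)] by auto
  have "cong_mat q (?A * ?B) (A * B)"
    using mult_cong[OF a(1) assms(1) b(1) assms(2)] a b cong_sym by blast
  then show ?thesis using a b assms by (simp add: SL_mod_def class_eq)
qed

lemma carrier_SL: "X \<in> carrier (SL_mod n q) \<longleftrightarrow> (\<exists>M. X = mat_class n q M \<and> M \<in> carrier_mat n n \<and> q dvd det M - 1)"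
  by (auto simp: SL_mod_def)

lemma carrier_det: assumes "M \<in> carrier_mat n n" "mat_class n q M \<in> carrier (SL_mod n q)"
  shows "q dvd det M - 1"
proof -
  obtain N where N: "mat_class n q M = mat_class n q N" "N \<in> carrier_mat n n" "q dvd det N - 1"
    using assms(2) unfolding carrier_SL by blast
  then have "cong_mat q N M" using assms(1) class_eq[OF assms(1) N(2)] cong_sym by blast
  then have "q dvd det N - det M" using det_cong N(2) assms(1) by blast
  then have "q dvd (det N - 1) - (det N - det M)" using dvd_diff[OF N(3)] by blast
  then show ?thesis by simp
qed

lemma one_SL: "\<one>\<^bsub>SL_mod n q\<^esub> = mat_class n q (1\<^sub>m n)" by (simp add: SL_mod_def)

lemma dvd_det_mult: "(q::'a::comm_ring_1) dvd a - 1 \<Longrightarrow> q dvd b - 1 \<Longrightarrow> q dvd a * b - 1"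
proof -
  assume "q dvd a - 1" "q dvd b - 1"
  then have "q dvd a * (b - 1) + (a - 1)" by (intro dvd_add dvd_mult) auto
  then show ?thesis by (simp add: algebra_simps)
qed

lemma monoid_SL: "monoid (SL_mod n q)"
proof (rule monoidI)
  fix x y assume "x \<in> carrier (SL_mod n q)" "y \<in> carrier (SL_mod n q)"
  then obtain A B where "x = mat_class n q A" "A \<in> carrier_mat n n" "q dvd det A - 1"
     "y = mat_class n q B" "B \<in> carrier_mat n n" "q dvd det B - 1" unfolding carrier_SL by blast
  then show "x \<otimes>\<^bsub>SL_mod n q\<^esub> y \<in> carrier (SL_mod n q)"
    unfolding carrier_SL by (intro exI[of _ "A*B"]) (auto simp: mult_class det_mult dvd_det_mult)
next
  show "\<one>\<^bsub>SL_mod n q\<^esub> \<in> carrier (SL_mod n q)" unfolding carrier_SL one_SL by auto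
next
  fix x y z assume "x \<in> carrier (SL_mod n q)" "y \<in> carrier (SL_mod n q)" "z \<in> carrier (SL_mod n q)"
  then obtain A B C where "x = mat_class n q A" "A \<in> carrier_mat n n"
     "y = mat_class n q B" "B \<in> carrier_mat n n"  "z = mat_class n q C" "C \<in> carrier_mat n n"
    unfolding carrier_SL by blast
  then show "x \<otimes>\<^bsub>SL_mod n q\<^esub> y \<otimes>\<^bsub>SL_mod n q\<^esub> z = x \<otimes>\<^bsub>SL_mod n q\<^esub> (y \<otimes>\<^bsub>SL_mod n q\<^esub> z)"
    by (simp add: mult_class)
next
  fix x assume "x \<in> carrier (SL_mod n q)"
  then obtain A where "x = mat_class n q A" "A \<in> carrier_mat n n" unfolding carrier_SL by blast
  then show "\<one>\<^bsub>SL_mod n q\<^esub> \<otimes>\<^bsub>SL_mod n q\<^esub> x = x" "x \<otimes>\<^bsub>SL_mod n q\<^esub> \<one>\<^bsub>SL_mod n q\<^esub> = x"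
    by (simp_all add: one_SL mult_class)
qed

lemma reduce_class: assumes "q' dvd q" "M \<in> carrier_mat n n"
  shows "reduce_mod n q' (mat_class n q M) = mat_class n q' M"
proof -
  have "(SOME N. N \<in> mat_class n q M) \<in> carrier_mat n n \<and> cong_mat q M (SOME N. N \<in> mat_class n q M)"
    by (rule rep_class[OF assms(2)])
  then have "cong_mat q' (SOME N. N \<in> mat_class n q M) M" using assms cong_dvd cong_sym by blast
  then show ?thesis unfolding reduce_mod_def using assms class_eq by (metis \<open>_ \<and> _\<close>)
qed

lemma kernel_char: assumes "q' dvd q" "M \<in> carrier_mat n n"
  shows "mat_class n q M \<in> kernel (SL_mod n q) (SL_mod n q') (reduce_mod n q') \<longleftrightarrow>
     q dvd det M - 1 \<and> cong_mat q' M (1\<^sub>m n)"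
proof -
  have "mat_class n q M \<in> kernel (SL_mod n q) (SL_mod n q') (reduce_mod n q') \<longleftrightarrow>
     mat_class n q M \<in> carrier (SL_mod n q) \<and> mat_class n q' M = mat_class n q' (1\<^sub>m n)"
    using reduce_class[OF assms] by (simp add: kernel_def one_SL)
  also have "\<dots> \<longleftrightarrow> q dvd det M - 1 \<and> cong_mat q' M (1\<^sub>m n)"
    using carrier_det[OF assms(2)] class_eq[OF assms(2) one_carrier_mat] assms(2)
    unfolding carrier_SL by blast
  finally show ?thesis .
qed

lemma kernel_elem: assumes "X \<in> kernel (SL_mod n q) (SL_mod n q') (reduce_mod n q')" "q' dvd q"
  shows "\<exists>M. X = mat_class n q M \<and> M \<in> carrier_mat n n \<and> q dvd det M - 1 \<and> cong_mat q' M (1\<^sub>m n)"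
proof -
  obtain M where "X = mat_class n q M" "M \<in> carrier_mat n n"
    using assms unfolding kernel_def carrier_SL by blast
  then show ?thesis using assms kernel_char[OF assms(2)] by blast
qed




definition Ep :: "nat \<Rightarrow> nat \<Rightarrow> nat \<Rightarrow> 'a::comm_ring_1 mat" where
  "Ep n i j = (if i \<noteq> j then elem_mat n i j else elem_mat n i i - elem_mat n (n-1) (n-1))"

lemma Ep_carrier[simp]: "Ep n i j \<in> carrier_mat n n"
  by (simp add: Ep_def elem_mat_def minus_carrier_mat)

lemma Ep_dims[simp]: "dim_row (Ep n i j) = n" "dim_col (Ep n i j) = n"
  using Ep_carrier[of n i j] unfolding carrier_mat_def by auto

lemma elem_dims[simp]: "dim_row (elem_mat n i j) = n" "dim_col (elem_mat n i j) = n"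
  by (auto simp: elem_mat_def)

lemma Ep_index: "a < n \<Longrightarrow> b < n \<Longrightarrow> Ep n i j $$ (a,b) =
  (if i \<noteq> j then (if a = i \<and> b = j then 1 else 0)
   else (if a = i \<and> b = i then 1 else 0) - (if a = n-1 \<and> b = n-1 then 1 else 0))"
  by (simp add: Ep_def elem_mat_def)

lemma A_mat_eq: "A_mat n p r x i j = 1\<^sub>m n + (of_nat p ^ r) \<cdot>\<^sub>m (x \<cdot>\<^sub>m Ep n i j)"
  unfolding A_mat_def
  by (rule eq_matI) (auto simp: Ep_def elem_mat_def)

definition phi :: "nat \<Rightarrow> 'a::comm_ring_1 \<Rightarrow> 'a \<Rightarrow> 'a mat \<Rightarrow> 'a mat set" where
  "phi n q P Y = mat_class n q (1\<^sub>m n + P \<cdot>\<^sub>m Y)"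

lemma smult_smult_mat: "a \<cdot>\<^sub>m (b \<cdot>\<^sub>m A) = (a * b :: 'a :: comm_ring_1) \<cdot>\<^sub>m A"
  by (rule eq_matI) auto

lemma prod_expand: assumes Y: "Y \<in> carrier_mat n n" and Z: "Z \<in> carrier_mat n n"
  shows "(1\<^sub>m n + P \<cdot>\<^sub>m Y) * (1\<^sub>m n + P \<cdot>\<^sub>m Z) = (1\<^sub>m n + P \<cdot>\<^sub>m (Y + Z)) + (P * P :: 'a :: comm_ring_1) \<cdot>\<^sub>m (Y * Z)"
proof -
  have "(1\<^sub>m n + P \<cdot>\<^sub>m Y) * (1\<^sub>m n + P \<cdot>\<^sub>m Z) = 1\<^sub>m n * (1\<^sub>m n + P \<cdot>\<^sub>m Z) + P \<cdot>\<^sub>m Y * (1\<^sub>m n + P \<cdot>\<^sub>m Z)"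
    using Y Z by (intro add_mult_distrib_mat) auto
  also have "P \<cdot>\<^sub>m Y * (1\<^sub>m n + P \<cdot>\<^sub>m Z) = P \<cdot>\<^sub>m Y * 1\<^sub>m n + P \<cdot>\<^sub>m Y * (P \<cdot>\<^sub>m Z)"
    using Y Z by (intro mult_add_distrib_mat) auto
  also have "P \<cdot>\<^sub>m Y * (P \<cdot>\<^sub>m Z) = (P * P) \<cdot>\<^sub>m (Y * Z)"
  proof -
    have "P \<cdot>\<^sub>m Y * (P \<cdot>\<^sub>m Z) = P \<cdot>\<^sub>m (Y * (P \<cdot>\<^sub>m Z))"
      using Y Z by (intro mult_smult_assoc_mat) auto
    also have "Y * (P \<cdot>\<^sub>m Z) = P \<cdot>\<^sub>m (Y * Z)" using Y Z by (intro mult_smult_distrib)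
    finally show ?thesis by (simp add: smult_smult_mat)
  qed
  finally show ?thesis using Y Z
    by (intro eq_matI) (auto simp: algebra_simps)
qed

lemma cong_add_smult: assumes "A \<in> carrier_mat n n" "B \<in> carrier_mat n n" "q dvd c"
  shows "cong_mat q (A + c \<cdot>\<^sub>m B) A"
  using assms unfolding cong_mat_def by auto

lemma phi_hom: assumes Y: "Y \<in> carrier_mat n n" and Z: "Z \<in> carrier_mat n n" and q: "q dvd P * P"
  shows "phi n q P Y \<otimes>\<^bsub>SL_mod n q\<^esub> phi n q P Z = phi n q P (Y + Z)"
  unfolding phi_def using Y Z
  by (simp add: mult_class prod_expand class_eq) (intro cong_add_smult, auto simp: q)

lemma phi_zero: "phi n q P (0\<^sub>m n n) = \<one>\<^bsub>SL_mod n q\<^esub>"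
proof -
  have "1\<^sub>m n + P \<cdot>\<^sub>m 0\<^sub>m n n = 1\<^sub>m n" by (rule eq_matI) auto
  then show ?thesis by (simp add: phi_def one_SL)
qed

lemma phi_cong: assumes "E \<in> carrier_mat n n" "P * d dvd P * (x - y)"
  shows "phi n (P * d) P (x \<cdot>\<^sub>m E) = phi n (P * d) P (y \<cdot>\<^sub>m E)"
  unfolding phi_def
proof (subst class_eq)
  show "cong_mat (P * d) (1\<^sub>m n + P \<cdot>\<^sub>m (x \<cdot>\<^sub>m E)) (1\<^sub>m n + P \<cdot>\<^sub>m (y \<cdot>\<^sub>m E))"
    unfolding cong_mat_def
  proof (intro conjI allI impI)
    fix i j assume "i < dim_row (1\<^sub>m n + P \<cdot>\<^sub>m (x \<cdot>\<^sub>m E))" "j < dim_col (1\<^sub>m n + P \<cdot>\<^sub>m (x \<cdot>\<^sub>m E))"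
    then have ij: "i < n" "j < n" using assms by auto
    have "(1\<^sub>m n + P \<cdot>\<^sub>m (x \<cdot>\<^sub>m E)) $$ (i, j) - (1\<^sub>m n + P \<cdot>\<^sub>m (y \<cdot>\<^sub>m E)) $$ (i, j) = P * (x - y) * E $$ (i,j)"
      using ij assms by (simp add: algebra_simps)
    then show "P * d dvd (1\<^sub>m n + P \<cdot>\<^sub>m (x \<cdot>\<^sub>m E)) $$ (i, j) - (1\<^sub>m n + P \<cdot>\<^sub>m (y \<cdot>\<^sub>m E)) $$ (i, j)"
      using assms(2) by simp
  qed (use assms in auto)
qed (use assms in auto)




lemma det_by_diag: assumes "A \<in> carrier_mat n n"
  and "(\<forall>a b. b < a \<longrightarrow> a < n \<longrightarrow> A $$ (a,b) = 0) \<or> (\<forall>a b. a < b \<longrightarrow> b < n \<longrightarrow> A $$ (a,b) = 0)"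
  shows "det A = (\<Prod>b = 0..<n. A $$ (b,b))"
  using assms(2)
proof
  assume h: "\<forall>a b. b < a \<longrightarrow> a < n \<longrightarrow> A $$ (a,b) = 0"
  have "upper_triangular A" using h assms(1) unfolding upper_triangular_def by auto
  then show ?thesis using det_upper_triangular[OF _ assms(1)] prod_list_diag_prod assms(1) by auto
next
  assume h: "\<forall>a b. a < b \<longrightarrow> b < n \<longrightarrow> A $$ (a,b) = 0"
  show ?thesis using det_lower_triangular[OF _ assms(1)] h prod_list_diag_prod assms(1) by auto
qed

lemma det_Ep: assumes "i < n" "j < n" "\<not> (i = n-1 \<and> j = n-1)"
  shows "det (1\<^sub>m n + c \<cdot>\<^sub>m Ep n i j) = (if i \<noteq> j then 1 else (1 + c) * (1 - c))"
proof -
  let ?A = "1\<^sub>m n + c \<cdot>\<^sub>m Ep n i j"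
  have car: "?A \<in> carrier_mat n n" by simp
  have tri: "(\<forall>a b. b < a \<longrightarrow> a < n \<longrightarrow> ?A $$ (a,b) = 0) \<or> (\<forall>a b. a < b \<longrightarrow> b < n \<longrightarrow> ?A $$ (a,b) = 0)"
  proof (cases "i \<le> j")
    case True
    have "?A $$ (a,b) = 0" if "b < a" "a < n" for a b
    proof -
      have "b < n" using that by simp
      then show ?thesis using that True by (auto simp: Ep_index)
    qed
    then show ?thesis by blast
  next
    case False
    have "?A $$ (a,b) = 0" if "a < b" "b < n" for a b
    proof -
      have "a < n" using that by simp
      then show ?thesis using that False by (auto simp: Ep_index)
    qed
    then show ?thesis by blast
  qed
  have "det ?A = (\<Prod>b = 0..<n. ?A $$ (b,b))" by (rule det_by_diag[OF car tri])
  also have "\<dots> = (\<Prod>b = 0..<n. (if i \<noteq> j then 1 else (if b = i then 1 + c else 1) * (if b = n - 1 then 1 - c else 1)))"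
    using assms by (intro prod.cong) (auto simp: Ep_index)
  also have "\<dots> = (if i \<noteq> j then 1 else (1 + c) * (1 - c))"
    using assms by (auto simp: prod.distrib)
  finally show ?thesis .
qed

lemma det_Enn: assumes "n \<ge> 1"
  shows "det (1\<^sub>m n + c \<cdot>\<^sub>m elem_mat n (n-1) (n-1)) = 1 + c"
proof -
  let ?A = "1\<^sub>m n + c \<cdot>\<^sub>m elem_mat n (n-1) (n-1)"
  have car: "?A \<in> carrier_mat n n" by (simp add: elem_mat_def)
  have tri: "(\<forall>a b. b < a \<longrightarrow> a < n \<longrightarrow> ?A $$ (a,b) = 0) \<or> (\<forall>a b. a < b \<longrightarrow> b < n \<longrightarrow> ?A $$ (a,b) = 0)"
  proof -
    have "?A $$ (a,b) = 0" if "b < a" "a < n" for a b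
    proof -
      have "b < n" using that by simp
      then show ?thesis using that by (auto simp: elem_mat_def)
    qed
    then show ?thesis by blast
  qed
  have "det ?A = (\<Prod>b = 0..<n. ?A $$ (b,b))" by (rule det_by_diag[OF car tri])
  also have "\<dots> = (\<Prod>b = 0..<n. (if b = n - 1 then 1 + c else 1))"
    by (intro prod.cong) (auto simp: elem_mat_def)
  also have "\<dots> = 1 + c" using assms by auto
  finally show ?thesis .
qed




lemma smult_zero_left_mat: "E \<in> carrier_mat n n \<Longrightarrow> (0::'a::comm_ring_1) \<cdot>\<^sub>m E = 0\<^sub>m n n"
  by (rule eq_matI) auto

lemma trace_Ep: assumes "i < n"
  shows "(\<Sum>b = 0..<n. Ep n i j $$ (b,b)) = (0::'a::comm_ring_1)"
proof -
  have "(\<Sum>b = 0..<n. Ep n i j $$ (b,b)) = (\<Sum>b = 0..<n. (if i \<noteq> j then 0 else (if b = i then 1 else 0) - (if b = n-1 then (1::'a) else 0)))"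
    by (intro sum.cong) (auto simp: Ep_index)
  also have "\<dots> = 0"
  proof (cases "i = j")
    case True
    have "n - 1 < n" using assms by simp
    then have "(\<Sum>b = 0..<n. (if b = i then 1 else 0) - (if b = n-1 then (1::'a) else 0)) =
       (\<Sum>b = 0..<n. (if b = i then 1 else 0)) - (\<Sum>b = 0..<n. (if b = n-1 then (1::'a) else 0))"
      by (simp add: sum_subtractf)
    also have "\<dots> = 0" using assms \<open>n - 1 < n\<close> by simp
    finally show ?thesis using True by simp
  qed simp
  finally show ?thesis .
qed

lemma trace_Enn: assumes "n \<ge> 1"
  shows "(\<Sum>b = 0..<n. elem_mat n (n-1) (n-1) $$ (b,b)) = (1::'a::comm_ring_1)"
proof -
  have "(\<Sum>b = 0..<n. elem_mat n (n-1) (n-1) $$ (b,b)) = (\<Sum>b = 0..<n. (if b = n-1 then (1::'a) else 0))"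
    by (intro sum.cong) (auto simp: elem_mat_def)
  also have "\<dots> = 1" using assms by auto
  finally show ?thesis .
qed

context
  fixes n :: nat and P d :: "'a :: comm_ring_1"
  assumes qPP: "P * d dvd P * P" and n2: "n \<ge> 2"
begin

abbreviation "G \<equiv> SL_mod n (P * d)"
abbreviation "K \<equiv> kernel (SL_mod n (P * d)) (SL_mod n P) (reduce_mod n P)"

lemma Pq: "P dvd P * d" by simp

lemma phi_Ep_kernel: assumes "i < n" "j < n" "\<not> (i = n-1 \<and> j = n-1)"
  shows "phi n (P * d) P (x \<cdot>\<^sub>m Ep n i j) \<in> K"
proof -
  have eq: "1\<^sub>m n + P \<cdot>\<^sub>m (x \<cdot>\<^sub>m Ep n i j) = 1\<^sub>m n + (P * x) \<cdot>\<^sub>m Ep n i j" by (simp add: smult_smult_mat)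
  have "P * d dvd P * P * (- x * x)" using qPP by (simp add: dvd_mult2)
  moreover have "(1 + P * x) * (1 - P * x) - 1 = P * P * (- x * x)" by (simp add: algebra_simps)
  ultimately have "P * d dvd det (1\<^sub>m n + (P * x) \<cdot>\<^sub>m Ep n i j) - 1"
    using det_Ep[OF assms, of "P * x"] by auto
  moreover have "cong_mat P (1\<^sub>m n + (P * x) \<cdot>\<^sub>m Ep n i j) (1\<^sub>m n)"
    by (rule cong_add_smult) auto
  ultimately show ?thesis unfolding phi_def eq using kernel_char[OF Pq] by simp
qed

lemma kernel_mult: assumes "X \<in> K" "Y \<in> K" shows "X \<otimes>\<^bsub>G\<^esub> Y \<in> K"
proof -
  obtain A where A: "X = mat_class n (P*d) A" "A \<in> carrier_mat n n" "P * d dvd det A - 1" "cong_mat P A (1\<^sub>m n)"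
    using kernel_elem[OF assms(1) Pq] by blast
  obtain B where B: "Y = mat_class n (P*d) B" "B \<in> carrier_mat n n" "P * d dvd det B - 1" "cong_mat P B (1\<^sub>m n)"
    using kernel_elem[OF assms(2) Pq] by blast
  have "cong_mat P (A * B) (1\<^sub>m n * 1\<^sub>m n)"
    using A B by (intro mult_cong[of _ n n _ _ n]) auto
  then have c: "cong_mat P (A * B) (1\<^sub>m n)" by simp
  have "P * d dvd det (A * B) - 1" using A B by (simp add: det_mult dvd_det_mult)
  then show ?thesis using A B c kernel_char[OF Pq, of "A * B" n] by (simp add: mult_class)
qed

lemma one_kernel: "\<one>\<^bsub>G\<^esub> \<in> K"
  using kernel_char[OF Pq, of "1\<^sub>m n" n] by (simp add: one_SL cong_refl)

lemma phi_inv: assumes "i < n" "j < n" "\<not> (i = n-1 \<and> j = n-1)"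
  shows "inv\<^bsub>G\<^esub> (phi n (P * d) P (x \<cdot>\<^sub>m Ep n i j)) = phi n (P * d) P ((- x) \<cdot>\<^sub>m Ep n i j)"
proof -
  let ?h = "phi n (P * d) P (x \<cdot>\<^sub>m Ep n i j)" and ?h' = "phi n (P * d) P ((- x) \<cdot>\<^sub>m Ep n i j)"
  have m: "monoid G" by (rule monoid_SL)
  have hc: "?h \<in> carrier G" "?h' \<in> carrier G"
    using phi_Ep_kernel[OF assms] unfolding kernel_def by auto
  have z1: "x \<cdot>\<^sub>m Ep n i j + (- x) \<cdot>\<^sub>m Ep n i j = 0\<^sub>m n n" by (rule eq_matI) (auto simp: algebra_simps)
  have z2: "(- x) \<cdot>\<^sub>m Ep n i j + x \<cdot>\<^sub>m Ep n i j = 0\<^sub>m n n" by (rule eq_matI) (auto simp: algebra_simps)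
  have e1: "?h \<otimes>\<^bsub>G\<^esub> ?h' = \<one>\<^bsub>G\<^esub>" by (simp add: phi_hom[OF _ _ qPP] z1 phi_zero)
  have e2: "?h' \<otimes>\<^bsub>G\<^esub> ?h = \<one>\<^bsub>G\<^esub>" by (simp add: phi_hom[OF _ _ qPP] z2 phi_zero)
  show ?thesis unfolding m_inv_def
  proof (rule the_equality)
    show "?h' \<in> carrier G \<and> ?h \<otimes>\<^bsub>G\<^esub> ?h' = \<one>\<^bsub>G\<^esub> \<and> ?h' \<otimes>\<^bsub>G\<^esub> ?h = \<one>\<^bsub>G\<^esub>" using hc e1 e2 by auto
  next
    fix y assume "y \<in> carrier G \<and> ?h \<otimes>\<^bsub>G\<^esub> y = \<one>\<^bsub>G\<^esub> \<and> y \<otimes>\<^bsub>G\<^esub> ?h = \<one>\<^bsub>G\<^esub>"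
    then show "y = ?h'" using monoid.inv_unique[OF m, of y ?h ?h'] hc e1 by auto
  qed
qed

end



context
  fixes n p r :: nat and v :: "'i \<Rightarrow> 'a::comm_ring_1" and I :: "'i set"
  assumes n2: "n \<ge> 2" and r1: "r \<ge> 1" and Zb: "Z_basis I v" and p0: "p > 0"
begin

abbreviation "PP \<equiv> (of_nat p :: 'a) ^ r"
abbreviation "dd \<equiv> (of_nat p :: 'a)"
abbreviation "GG \<equiv> SL_mod n (PP * dd)"
abbreviation "HH \<equiv> {mat_class n (PP * dd) (A_mat n p r (v k) i j) | i j k.
              i < n \<and> j < n \<and> \<not> (i = n-1 \<and> j = n-1) \<and> k \<in> I}"

lemma qPP': "PP * dd dvd PP * PP"
proof -
  have a: "PP * dd = dd ^ Suc r" by (simp add: power_Suc2)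
  have b: "PP * PP = dd ^ (r + r)" by (simp add: power_add)
  have "dd ^ Suc r dvd dd ^ (r + r)" by (rule le_imp_power_dvd) (use r1 in simp)
  then show ?thesis by (simp only: a b)
qed

lemma H_phi: "mat_class n (PP * dd) (A_mat n p r x i j) = phi n (PP * dd) PP (x \<cdot>\<^sub>m Ep n i j)"
  by (simp add: A_mat_eq phi_def)

lemma gen_sub_kernel: "generate GG HH \<subseteq> kernel GG (SL_mod n PP) (reduce_mod n PP)"
proof
  fix x assume "x \<in> generate GG HH"
  then show "x \<in> kernel GG (SL_mod n PP) (reduce_mod n PP)"
  proof (induction rule: generate.induct)
    case one then show ?case using one_kernel[OF qPP' n2] .
  next
    case (incl h)
    then show ?case using phi_Ep_kernel[OF qPP' n2] H_phi by auto
  next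
    case (inv h)
    then obtain i j k where h: "h = phi n (PP * dd) PP (v k \<cdot>\<^sub>m Ep n i j)" "i < n" "j < n" "\<not> (i = n-1 \<and> j = n-1)"
      using H_phi by auto
    then show ?case using phi_inv[OF qPP' n2] phi_Ep_kernel[OF qPP' n2] by auto
  next
    case (eng h1 h2)
    then show ?case using kernel_mult[OF qPP' n2] by auto
  qed
qed

lemma span_gen: assumes ij: "i < n" "j < n" "\<not> (i = n-1 \<and> j = n-1)"
  shows "phi n (PP * dd) PP (x \<cdot>\<^sub>m Ep n i j) \<in> generate GG HH"
proof -
  define E where "E = (Ep n i j :: 'a mat)"
  have Ec: "E \<in> carrier_mat n n" by (simp add: E_def)
  define psi where "psi y = phi n (PP * dd) PP (y \<cdot>\<^sub>m E)" for y
  have hom: "psi (a + b) = psi a \<otimes>\<^bsub>GG\<^esub> psi b" for a b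
    unfolding psi_def using Ec
    by (simp add: add_smult_distrib_right_mat[OF Ec] phi_hom[OF _ _ qPP'])
  have zero: "psi 0 = \<one>\<^bsub>GG\<^esub>"
    unfolding psi_def by (simp add: smult_zero_left_mat[OF Ec] phi_zero)
  have natm: "psi (of_nat m * v k) \<in> generate GG HH" if k: "k \<in> I" for m k
  proof (induction m)
    case 0 then show ?case using zero generate.one by simp
  next
    case (Suc m)
    have "psi (v k) \<in> HH" unfolding psi_def E_def using ij k H_phi by blast
    then have "psi (v k) \<in> generate GG HH" by (rule generate.incl)
    moreover have "of_nat (Suc m) * v k = v k + of_nat m * v k" by (simp add: algebra_simps)
    ultimately have "psi (of_nat (Suc m) * v k) = psi (v k) \<otimes>\<^bsub>GG\<^esub> psi (of_nat m * v k)"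
      using hom by simp
    then show ?case using generate.eng[OF \<open>psi (v k) \<in> generate GG HH\<close> Suc] by simp
  qed
  have intm: "psi (of_int c * v k) \<in> generate GG HH" if k: "k \<in> I" for c k
  proof -
    define m where "m = nat (c mod int p)"
    have mm: "int m = c mod int p" unfolding m_def using p0 by simp
    have "c = int p * (c div int p) + int m" using mm by simp
    then have "(of_int c :: 'a) = of_int (int p * (c div int p) + int m)" by simp
    then have "(of_int c :: 'a) = dd * of_int (c div int p) + of_nat m" by simp
    then have "PP * (of_int c * v k - of_nat m * v k) = PP * dd * (of_int (c div int p) * v k)"
      by (simp add: algebra_simps)
    then have "PP * dd dvd PP * (of_int c * v k - of_nat m * v k)" by simp
    then have "psi (of_int c * v k) = psi (of_nat m * v k)"
      unfolding psi_def by (rule phi_cong[OF Ec])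
    then show ?thesis using natm[OF k] by simp
  qed
  have sumK: "finite K \<Longrightarrow> K \<subseteq> I \<Longrightarrow> psi (\<Sum>k\<in>K. of_int (c k) * v k) \<in> generate GG HH" for K c
  proof (induction K rule: finite_induct)
    case empty then show ?case using zero generate.one by simp
  next
    case (insert a F)
    have "psi (\<Sum>k\<in>insert a F. of_int (c k) * v k) = psi (of_int (c a) * v a) \<otimes>\<^bsub>GG\<^esub> psi (\<Sum>k\<in>F. of_int (c k) * v k)"
      using insert(1,2) hom by simp
    then show ?case using generate.eng[OF intm insert(3)] insert(4) by simp
  qed
  obtain c where c: "finite {k. c k \<noteq> 0}" "{k. c k \<noteq> 0} \<subseteq> I" "x = (\<Sum>k\<in>{k. c k \<noteq> 0}. of_int (c k) * v k)"
    using Zb unfolding Z_basis_def by blast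
  show ?thesis using sumK[OF c(1,2)] c(3) unfolding psi_def E_def by simp
qed

lemma trace_gen: "Y \<in> carrier_mat n n \<Longrightarrow> (\<Sum>b = 0..<n. Y $$ (b,b)) = 0 \<Longrightarrow> phi n (PP * dd) PP Y \<in> generate GG HH"
proof (induction "card {(a,b). a < n \<and> b < n \<and> \<not> (a = n-1 \<and> b = n-1) \<and> Y $$ (a,b) \<noteq> 0}" arbitrary: Y rule: less_induct)
  case less
  define S where "S Z = {(a,b). a < n \<and> b < n \<and> \<not> (a = n-1 \<and> b = n-1) \<and> Z $$ (a,b) \<noteq> 0}" for Z :: "'a mat"
  have finS: "finite (S Z)" for Z
    by (rule finite_subset[of _ "{0..<n} \<times> {0..<n}"]) (auto simp: S_def)
  have nn: "n - 1 < n" using n2 by simp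
  show ?case
  proof (cases "S Y = {}")
    case True
    then have z: "Y $$ (a,b) = 0" if "a < n" "b < n" "\<not> (a = n-1 \<and> b = n-1)" for a b
      using that unfolding S_def by auto
    have "(\<Sum>b = 0..<n. Y $$ (b,b)) = (\<Sum>b = 0..<n. if b = n - 1 then Y $$ (n-1,n-1) else 0)"
      by (intro sum.cong) (auto simp: z)
    also have "\<dots> = Y $$ (n-1,n-1)" using nn by simp
    finally have "Y $$ (n-1,n-1) = 0" using less by simp
    then have "Y = 0\<^sub>m n n" using less z by (intro eq_matI) auto
    then show ?thesis using phi_zero[of n "PP * dd" PP] generate.one[of GG HH] by simp
  next
    case False
    then obtain i j where ij: "(i,j) \<in> S Y" by auto
    then have ij': "i < n" "j < n" "\<not> (i = n-1 \<and> j = n-1)" unfolding S_def by auto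
    define a where "a = Y $$ (i,j)"
    define Y1 where "Y1 = Y - a \<cdot>\<^sub>m Ep n i j"
    have Y1c: "Y1 \<in> carrier_mat n n" unfolding Y1_def by (simp add: minus_carrier_mat)
    have Ysplit: "Y = a \<cdot>\<^sub>m Ep n i j + Y1"
      unfolding Y1_def using less(2) by (intro eq_matI) auto
    have Y1e: "Y1 $$ (c,e) = Y $$ (c,e) - a * Ep n i j $$ (c,e)" if "c < n" "e < n" for c e
      unfolding Y1_def using that by simp
    have sub: "S Y1 \<subset> S Y"
    proof
      show "S Y1 \<subseteq> S Y"
      proof
        fix z assume "z \<in> S Y1"
        then obtain c e where z: "z = (c,e)" "c < n" "e < n" "\<not> (c = n-1 \<and> e = n-1)" "Y1 $$ (c,e) \<noteq> 0"
          unfolding S_def by auto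
        have aY: "Y $$ (i,j) = a" by (simp add: a_def)
        show "z \<in> S Y" using z Y1e[OF z(2,3)] ij' aY unfolding S_def
          by (auto simp: Ep_index split: if_splits)
      qed
      have "Y1 $$ (i,j) = 0" using Y1e[OF ij'(1,2)] ij' unfolding a_def by (auto simp: Ep_index)
      then have "(i,j) \<notin> S Y1" unfolding S_def by auto
      then show "S Y1 \<noteq> S Y" using ij by auto
    qed
    have cardlt: "card (S Y1) < card (S Y)" by (rule psubset_card_mono[OF finS sub])
    have "(\<Sum>b = 0..<n. Y1 $$ (b,b)) = (\<Sum>b = 0..<n. Y $$ (b,b)) - a * (\<Sum>b = 0..<n. Ep n i j $$ (b,b))"
      by (simp add: Y1e sum_subtractf sum_distrib_left)
    also have "\<dots> = 0"
    proof -
      have "(\<Sum>b = 0..<n. Ep n i j $$ (b,b)) = (0::'a)" by (rule trace_Ep[OF ij'(1)])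
      then show ?thesis using less(3) by simp
    qed
    finally have tr1: "(\<Sum>b = 0..<n. Y1 $$ (b,b)) = 0" .
    have g1: "phi n (PP * dd) PP Y1 \<in> generate GG HH"
      using less(1)[OF _ Y1c tr1] cardlt unfolding S_def by blast
    have g2: "phi n (PP * dd) PP (a \<cdot>\<^sub>m Ep n i j) \<in> generate GG HH" by (rule span_gen[OF ij'])
    have "phi n (PP * dd) PP Y = phi n (PP * dd) PP (a \<cdot>\<^sub>m Ep n i j) \<otimes>\<^bsub>GG\<^esub> phi n (PP * dd) PP Y1"
      using Ysplit phi_hom[OF _ Y1c qPP', of "a \<cdot>\<^sub>m Ep n i j"] by simp
    then show ?thesis using generate.eng[OF g2 g1] by simp
  qed
qed

lemma kernel_sub_gen: "kernel GG (SL_mod n PP) (reduce_mod n PP) \<subseteq> generate GG HH"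
proof
  fix X assume X: "X \<in> kernel GG (SL_mod n PP) (reduce_mod n PP)"
  have Pq: "PP dvd PP * dd" by simp
  obtain M where M: "X = mat_class n (PP * dd) M" "M \<in> carrier_mat n n" "PP * dd dvd det M - 1" "cong_mat PP M (1\<^sub>m n)"
    using kernel_elem[OF X Pq] by blast
  define Y where "Y = mat n n (\<lambda>(a,b). SOME y. M $$ (a,b) - 1\<^sub>m n $$ (a,b) = PP * y)"
  have Yc: "Y \<in> carrier_mat n n" by (simp add: Y_def)
  have Yspec: "M $$ (a,b) - 1\<^sub>m n $$ (a,b) = PP * Y $$ (a,b)" if "a < n" "b < n" for a b
  proof -
    have "PP dvd M $$ (a,b) - 1\<^sub>m n $$ (a,b)" using M(2,4) that unfolding cong_mat_def by auto
    then have "\<exists>y. M $$ (a,b) - 1\<^sub>m n $$ (a,b) = PP * y" by (auto elim: dvdE)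
    then have "M $$ (a,b) - 1\<^sub>m n $$ (a,b) = PP * (SOME y. M $$ (a,b) - 1\<^sub>m n $$ (a,b) = PP * y)"
      by (rule someI_ex)
    then show ?thesis using that by (simp add: Y_def)
  qed
  have Meq: "M = 1\<^sub>m n + PP \<cdot>\<^sub>m Y"
  proof (rule eq_matI)
    fix a b assume ab: "a < dim_row (1\<^sub>m n + PP \<cdot>\<^sub>m Y)" "b < dim_col (1\<^sub>m n + PP \<cdot>\<^sub>m Y)"
    then have ab': "a < n" "b < n" using Yc by auto
    have "M $$ (a,b) = 1\<^sub>m n $$ (a,b) + (M $$ (a,b) - 1\<^sub>m n $$ (a,b))" by simp
    also have "\<dots> = 1\<^sub>m n $$ (a,b) + PP * Y $$ (a,b)" using Yspec[OF ab'] by simp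
    finally show "M $$ (a,b) = (1\<^sub>m n + PP \<cdot>\<^sub>m Y) $$ (a,b)" using ab' Yc by simp
  qed (use M Yc in auto)
  define t where "t = (\<Sum>b = 0..<n. Y $$ (b,b))"
  define Enn where "Enn = (elem_mat n (n-1) (n-1) :: 'a mat)"
  have Ennc: "Enn \<in> carrier_mat n n" by (simp add: Enn_def elem_mat_def)
  define Y0 where "Y0 = Y - t \<cdot>\<^sub>m Enn"
  have Y0c: "Y0 \<in> carrier_mat n n" unfolding Y0_def by (simp add: minus_carrier_mat Ennc)
  have n1: "n \<ge> 1" using n2 by simp
  have "(\<Sum>b = 0..<n. Y0 $$ (b,b)) = t - t * (\<Sum>b = 0..<n. Enn $$ (b,b))"
    unfolding Y0_def t_def using Yc Ennc by (simp add: sum_subtractf sum_distrib_left)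
  also have "\<dots> = 0"
  proof -
    have "(\<Sum>b = 0..<n. Enn $$ (b,b)) = (1::'a)" unfolding Enn_def by (rule trace_Enn[OF n1])
    then show ?thesis by simp
  qed
  finally have tr0: "(\<Sum>b = 0..<n. Y0 $$ (b,b)) = 0" .
  have g: "phi n (PP * dd) PP Y0 \<in> generate GG HH" by (rule trace_gen[OF Y0c tr0])
  then have k: "phi n (PP * dd) PP Y0 \<in> kernel GG (SL_mod n PP) (reduce_mod n PP)"
    using gen_sub_kernel by blast
  have Y0car: "1\<^sub>m n + PP \<cdot>\<^sub>m Y0 \<in> carrier_mat n n" using Y0c by simp
  have d1: "PP * dd dvd det (1\<^sub>m n + PP \<cdot>\<^sub>m Y0) - 1"
    using k kernel_char[OF Pq Y0car] unfolding phi_def by simp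
  have Ysplit: "Y = Y0 + t \<cdot>\<^sub>m Enn" unfolding Y0_def using Yc Ennc by (intro eq_matI) auto
  have tEc: "t \<cdot>\<^sub>m Enn \<in> carrier_mat n n" using Ennc by simp
  have Xeq: "X = phi n (PP * dd) PP Y0 \<otimes>\<^bsub>GG\<^esub> phi n (PP * dd) PP (t \<cdot>\<^sub>m Enn)"
    using M(1) Meq Ysplit phi_hom[OF Y0c tEc qPP'] unfolding phi_def by simp
  have Tc: "1\<^sub>m n + PP \<cdot>\<^sub>m (t \<cdot>\<^sub>m Enn) \<in> carrier_mat n n" using tEc by simp
  have "X = mat_class n (PP * dd) ((1\<^sub>m n + PP \<cdot>\<^sub>m Y0) * (1\<^sub>m n + PP \<cdot>\<^sub>m (t \<cdot>\<^sub>m Enn)))"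
    using Xeq unfolding phi_def by (simp add: mult_class[OF Y0car Tc])
  then have "cong_mat (PP * dd) M ((1\<^sub>m n + PP \<cdot>\<^sub>m Y0) * (1\<^sub>m n + PP \<cdot>\<^sub>m (t \<cdot>\<^sub>m Enn)))"
    using M(1,2) class_eq Y0car Tc by (metis mult_carrier_mat)
  then have "PP * dd dvd det M - det ((1\<^sub>m n + PP \<cdot>\<^sub>m Y0) * (1\<^sub>m n + PP \<cdot>\<^sub>m (t \<cdot>\<^sub>m Enn)))"
    using det_cong M(2) Y0car Tc mult_carrier_mat by blast
  moreover have "det (1\<^sub>m n + PP \<cdot>\<^sub>m (t \<cdot>\<^sub>m Enn)) = 1 + PP * t"
    unfolding Enn_def smult_smult_mat by (rule det_Enn[OF n1])
  ultimately have d2: "PP * dd dvd det M - det (1\<^sub>m n + PP \<cdot>\<^sub>m Y0) * (1 + PP * t)"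
    using det_mult[OF Y0car Tc] by simp
  define D where "D = det M"
  define e where "e = det (1\<^sub>m n + PP \<cdot>\<^sub>m Y0)"
  have "PP * dd dvd (D - 1) - (D - e * (1 + PP * t)) - (e - 1) - (e - 1) * (PP * t)"
  proof -
    have a1: "PP * dd dvd D - 1" using M(3) by (simp add: D_def)
    have a2: "PP * dd dvd D - e * (1 + PP * t)" using d2 by (simp add: D_def e_def)
    have a3: "PP * dd dvd e - 1" using d1 by (simp add: e_def)
    have a4: "PP * dd dvd (e - 1) * (PP * t)" using a3 by (rule dvd_mult2)
    show ?thesis by (rule dvd_diff[OF dvd_diff[OF dvd_diff[OF a1 a2] a3] a4])
  qed
  moreover have "(D - 1) - (D - e * (1 + PP * t)) - (e - 1) - (e - 1) * (PP * t) = PP * t"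
    by (simp add: algebra_simps)
  ultimately have qt: "PP * dd dvd PP * t" by simp
  have "phi n (PP * dd) PP (t \<cdot>\<^sub>m Enn) = \<one>\<^bsub>GG\<^esub>"
  proof -
    have "1\<^sub>m n + PP \<cdot>\<^sub>m (t \<cdot>\<^sub>m Enn) = 1\<^sub>m n + (PP * t) \<cdot>\<^sub>m Enn" by (simp add: smult_smult_mat)
    moreover have "cong_mat (PP * dd) (1\<^sub>m n + (PP * t) \<cdot>\<^sub>m Enn) (1\<^sub>m n)"
      by (rule cong_add_smult[OF _ Ennc qt]) simp
    ultimately show ?thesis unfolding phi_def one_SL using class_eq Tc by (metis one_carrier_mat)
  qed
  then have "X = phi n (PP * dd) PP Y0"
  proof -
    have c: "phi n (PP * dd) PP Y0 \<in> carrier GG" using k unfolding kernel_def by simp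
    show ?thesis using Xeq \<open>phi n (PP * dd) PP (t \<cdot>\<^sub>m Enn) = \<one>\<^bsub>GG\<^esub>\<close>
      monoid.r_one[OF monoid_SL c] by simp
  qed
  then show "X \<in> generate GG HH" using g by simp
qed

end


theorem corollary3p8:
  fixes v :: "'i \<Rightarrow> 'a::comm_ring_1" and I :: "'i set" and n p r :: nat
  assumes "Z_basis I v" and "n \<ge> 2" and "prime p" and "r \<ge> 1"
  shows "generate (SL_mod n ((of_nat p :: 'a) ^ (r+1)))
           {mat_class n ((of_nat p :: 'a) ^ (r+1)) (A_mat n p r (v k) i j) | i j k.
              i < n \<and> j < n \<and> \<not> (i = n-1 \<and> j = n-1) \<and> k \<in> I}
         = kernel (SL_mod n ((of_nat p :: 'a) ^ (r+1))) (SL_mod n ((of_nat p :: 'a) ^ r))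
             (reduce_mod n ((of_nat p :: 'a) ^ r))"
proof -
  have p0: "p > 0" using assms(3) by (simp add: prime_gt_0_nat)
  have e: "(of_nat p :: 'a) ^ (r+1) = (of_nat p :: 'a) ^ r * of_nat p" by (simp add: power_Suc2)
  show ?thesis unfolding e
    using gen_sub_kernel[OF assms(2) assms(4) assms(1) p0] kernel_sub_gen[OF assms(2) assms(4) assms(1) p0]
    by blast
qed

end
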